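(* Let $a\geq 1$ and $b\geq 2$ be integers. Let $x\in\Lambda^{a+b}$ have coordinates that are linearly independent over $\mathbb{Q}$, and suppose that $T_{a,b}^k(x)\not\to(0,\ldots,0)$ as $k\to\infty$. Then there exists $k\geq 1$ such that $T_{a,b}^k(x)\in A$.
   Context: For $n\geq 1$ let $\Lambda^n=\{x\in\mathbb{R}^n : 0\leq x_1\leq\cdots\leq x_n\}$. For integers $a,b\geq 1$ the map $T_{a,b}:\Lambda^{a+b}\to\Lambda^{a+b}$ sends $x$ to the vector obtained by arranging $x_1,\ldots,x_a,\,x_{a+1}-x_a,\ldots,x_{a+b}-x_a$ in nondecreasing order. $A=\{x\in\Lambda^{a+b}: x_1+\cdots+x_{a+b}\leq b\,x_{a+b}\}$. *)

theory Defs
  imports "HOL-Analysis.Analysis"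
begin

text \<open>Vectors in R^n are represented as real lists of length n; entry (i+1) of the
paper is index i of the list.\<close>

definition Lambda :: "nat \<Rightarrow> real list set" where
  "Lambda n = {x. length x = n \<and> (\<forall>i<n. 0 \<le> x ! i) \<and> sorted x}"

definition T :: "nat \<Rightarrow> nat \<Rightarrow> real list \<Rightarrow> real list" where
  "T a b x = sort (take a x @ map (\<lambda>y. y - x ! (a - 1)) (take b (drop a x)))"

definition A_set :: "nat \<Rightarrow> nat \<Rightarrow> real list set" where
  "A_set a b = {x. x \<in> Lambda (a + b) \<and> sum_list x \<le> real b * x ! (a + b - 1)}"

definition rat_lin_indep :: "real list \<Rightarrow> bool" where
  "rat_lin_indep x \<longleftrightarrow>
     (\<forall>c :: nat \<Rightarrow> rat. (\<Sum>i<length x. of_rat (c i) * x ! i) = 0 \<longrightarrow> (\<forall>i<length x. c i = 0))"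

end

theory Submission
  imports Defs "HOL-Combinatorics.Permutations"
begin

lemma indep_perm:
  assumes "rat_lin_indep z" "mset w = mset z"
  shows "rat_lin_indep w"
proof -
  obtain p where p: "p permutes {..<length z}" "permute_list p z = w"
    by (rule mset_eq_permutation[OF assms(2)])
  have len: "length w = length z" using mset_eq_length[OF assms(2)] .
  show ?thesis unfolding rat_lin_indep_def
  proof (intro allI impI)
    fix c :: "nat \<Rightarrow> rat" and i
    assume h: "(\<Sum>i<length w. of_rat (c i) * w ! i) = 0" and i: "i < length w"
    have "(\<Sum>i<length w. of_rat (c i) * w!i) = (\<Sum>i<length z. of_rat (c (inv p (p i))) * z ! p i)"
      using p permute_list_nth len permutes_inverses(2)[OF p(1)] by (intro sum.cong) auto
    also have "\<dots> = (\<Sum>j<length z. of_rat (c (inv p j)) * z!j)"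
      by (rule sum.reindex_bij_betw[OF permutes_imp_bij[OF p(1)], where g = "\<lambda>j. of_rat (c (inv p j)) * z!j"])
    finally have "(\<Sum>j<length z. of_rat (c (inv p j)) * z!j) = 0" using h by simp
    hence "\<forall>j<length z. c (inv p j) = 0" using assms(1) unfolding rat_lin_indep_def
      by (erule_tac x="\<lambda>j. c (inv p j)" in allE) auto
    moreover have "p i < length z" using permutes_in_image[OF p(1)] i len by auto
    ultimately show "c i = 0" using permutes_inverses(2)[OF p(1)] by metis
  qed
qed

lemma indep_nonzero:
  assumes "rat_lin_indep y" "i < length y"
  shows "y ! i \<noteq> 0"
proof
  assume h: "y ! i = 0"
  have "(\<Sum>j<length y. of_rat (if j = i then 1 else 0) * y ! j) = 0"
    proof -
    have "(\<Sum>j<length y. of_rat (if j = i then 1 else 0) * y ! j) = (\<Sum>j<length y. if j = i then y ! i else 0)"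
      by (rule sum.cong) auto
    also have "\<dots> = 0" using h by simp
    finally show ?thesis .
  qed
  hence "\<forall>j<length y. (if j = i then 1 else (0::rat)) = 0"
    using assms(1) unfolding rat_lin_indep_def
    by (erule_tac x="\<lambda>j. if j = i then 1 else (0::rat)" in allE) auto
  thus False using assms(2) by auto
qed

lemma indep_shift:
  assumes "rat_lin_indep y" "a \<ge> 1" "length y = n" "a \<le> n"
    and zdef: "\<And>i. i < n \<Longrightarrow> z ! i = (if i < a then y ! i else y ! i - y ! (a - 1))"
    and lz: "length z = n"
  shows "rat_lin_indep z"
  unfolding rat_lin_indep_def
proof (intro allI impI)
  fix c :: "nat \<Rightarrow> rat" and i
  assume h: "(\<Sum>i<length z. of_rat (c i) * z ! i) = 0" and i: "i < length z"
  define s where "s = (\<Sum>j\<in>{a..<n}. c j)"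
  define d where "d = (\<lambda>j. if j = a - 1 then c j - s else c j)"
  have e1: "(\<Sum>i<n. of_rat (c i) * z ! i) = (\<Sum>i<n. of_rat (c i) * y ! i)
     - (\<Sum>i<n. if a \<le> i then of_rat (c i) * y ! (a-1) else 0)"
    by (subst sum_subtractf[symmetric], rule sum.cong) (auto simp: zdef algebra_simps)
  have e2: "(\<Sum>i<n. if a \<le> i then of_rat (c i) * y ! (a-1) else 0) = of_rat s * y ! (a - 1)"
  proof -
    have "(\<Sum>i<n. if a \<le> i then of_rat (c i) * y ! (a-1) else 0) = (\<Sum>i\<in>{a..<n}. of_rat (c i) * y ! (a-1))"
      by (simp add: sum.If_cases) (rule sum.cong, auto)
    thus ?thesis by (simp add: s_def of_rat_sum sum_distrib_right)
  qed
  have e3: "(\<Sum>i<n. of_rat (d i) * y ! i) = (\<Sum>i<n. of_rat (c i) * y ! i)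
      + (\<Sum>i<n. if i = a - 1 then - of_rat s * y ! (a-1) else 0)"
    by (subst sum.distrib[symmetric], rule sum.cong) (auto simp: d_def of_rat_diff algebra_simps)
  have e4: "(\<Sum>i<n. if i = a - 1 then - of_rat s * y ! (a-1) else (0::real)) = - of_rat s * y ! (a-1)"
    using assms by (simp add: sum.delta)
  have "(\<Sum>i<n. of_rat (d i) * y ! i) = 0" using h e1 e2 e3 e4 lz by simp
  hence dz: "\<forall>j<n. d j = 0" using assms(1,3) unfolding rat_lin_indep_def by blast
  have cz: "\<And>j. j < n \<Longrightarrow> j \<noteq> a - 1 \<Longrightarrow> c j = 0" using dz by (auto simp: d_def)
  have "s = 0" unfolding s_def using cz assms by (intro sum.neutral) auto
  moreover have "a - 1 < n" using assms by simp
  ultimately have "c (a - 1) = 0" using dz[rule_format, of "a - 1"] by (simp add: d_def)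
  thus "c i = 0" using cz i lz by (cases "i = a - 1") auto
qed

definition Z :: "nat \<Rightarrow> nat \<Rightarrow> real list \<Rightarrow> real list" where
  "Z a b y = take a y @ map (\<lambda>t. t - y ! (a - 1)) (take b (drop a y))"

lemma T_Z: "T a b y = sort (Z a b y)" by (simp add: T_def Z_def)

lemma Z_len: "length y = a + b \<Longrightarrow> length (Z a b y) = a + b"
  by (simp add: Z_def)

lemma Z_nth: "length y = a + b \<Longrightarrow> i < a + b \<Longrightarrow>
   Z a b y ! i = (if i < a then y ! i else y ! i - y ! (a - 1))"
  by (simp add: Z_def nth_append)

lemma Lam: "y \<in> Lambda n \<Longrightarrow> length y = n \<and> sorted y \<and> (\<forall>i<n. 0 \<le> y ! i)"
  by (simp add: Lambda_def)

lemma Z_nonneg: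
  assumes "y \<in> Lambda (a + b)" "a \<ge> 1" "i < a + b"
  shows "0 \<le> Z a b y ! i"
proof -
  have L: "length y = a + b" "sorted y" "\<forall>i<a+b. 0 \<le> y ! i" using Lam[OF assms(1)] by auto
  show ?thesis
  proof (cases "i < a")
    case True thus ?thesis using L assms Z_nth by auto
  next
    case False
    hence "y ! (a - 1) \<le> y ! i" using L assms by (intro sorted_nth_mono) auto
    thus ?thesis using False L assms Z_nth by auto
  qed
qed

lemma Z_le_max:
  assumes "y \<in> Lambda (a + b)" "a \<ge> 1" "b \<ge> 1" "i < a + b"
  shows "Z a b y ! i \<le> y ! (a + b - 1)"
proof -
  have L: "length y = a + b" "sorted y" "\<forall>i<a+b. 0 \<le> y ! i" using Lam[OF assms(1)] by auto
  have "y ! i \<le> y ! (a + b - 1)" using L assms by (intro sorted_nth_mono) auto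
  moreover have "0 \<le> y ! (a - 1)" using L(3) assms(2,4) by simp
  ultimately show ?thesis using Z_nth[OF L(1) assms(4)] by auto
qed

lemma T_Lambda:
  assumes "y \<in> Lambda (a + b)" "a \<ge> 1"
  shows "T a b y \<in> Lambda (a + b)"
proof -
  have L: "length y = a + b" using Lam[OF assms(1)] by auto
  have "\<forall>t\<in>set (Z a b y). 0 \<le> t"
    using Z_nonneg[OF assms] Z_len[OF L] by (auto simp: in_set_conv_nth)
  hence "\<forall>i<a+b. 0 \<le> sort (Z a b y) ! i"
    using Z_len[OF L] by (metis length_sort nth_mem set_sort)
  thus ?thesis using Z_len[OF L] by (simp add: Lambda_def T_Z)
qed

lemma T_len: "length y = a + b \<Longrightarrow> length (T a b y) = a + b"
  by (simp add: T_Z Z_len)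

lemma sum_split_tail:
  fixes f :: "nat \<Rightarrow> real"
  shows "(\<Sum>i<a+b. f i) = (\<Sum>i<a. f i) + (\<Sum>i\<in>{a..<a+b}. f i)"
  by (metis add.commute le_add1 sum.atLeastLessThan_concat lessThan_atLeast0 add_0)

lemma T_sum:
  assumes "length y = a + b"
  shows "sum_list (T a b y) = sum_list y - real b * y ! (a - 1)"
proof -
  have "sum_list (T a b y) = sum_list (Z a b y)"
    by (simp add: T_Z sum_mset_sum_list[symmetric])
  also have "\<dots> = (\<Sum>i<a+b. Z a b y ! i)" by (simp add: sum_list_sum_nth Z_len[OF assms] atLeast0LessThan)
  also have "\<dots> = (\<Sum>i<a+b. y ! i) - (\<Sum>i<a+b. if a \<le> i then y ! (a - 1) else 0)"
    by (subst sum_subtractf[symmetric], rule sum.cong) (auto simp: Z_nth[OF assms])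
  also have "(\<Sum>i<a+b. if a \<le> i then y ! (a - 1) else 0) = (\<Sum>i\<in>{a..<a+b}. y ! (a - 1))"
    by (subst sum_split_tail) (auto intro!: sum.neutral)
  also have "\<dots> = real b * y ! (a - 1)" by simp
  finally show ?thesis using assms by (simp add: sum_list_sum_nth atLeast0LessThan)
qed

lemma T_max:
  assumes "y \<in> Lambda (a + b)" "a \<ge> 1" "b \<ge> 1"
  shows "T a b y ! (a + b - 1) \<le> y ! (a + b - 1)"
proof -
  have L: "length y = a + b" using Lam[OF assms(1)] by auto
  have "\<forall>t\<in>set (Z a b y). t \<le> y ! (a + b - 1)"
    using Z_le_max[OF assms] Z_len[OF L] by (auto simp: in_set_conv_nth)
  moreover have "T a b y ! (a + b - 1) \<in> set (Z a b y)"
    using T_len[OF L] assms by (metis T_Z set_sort nth_mem add_gr_0 diff_less less_numeral_extra(1) order_less_le_trans)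
  ultimately show ?thesis by blast
qed

lemma T_keep:
  assumes "y \<in> Lambda (a + b)" "a \<ge> 1" "b \<ge> 1" "2 * y ! (a - 1) \<le> y ! a"
  shows "T a b y ! (a - 1) = y ! (a - 1)"
proof -
  have L: "length y = a + b" "sorted y" using Lam[OF assms(1)] by auto
  have "sorted (Z a b y)"
    unfolding sorted_iff_nth_mono
  proof (intro allI impI)
    fix i j assume ij: "i \<le> j" "j < length (Z a b y)"
    hence j: "j < a + b" using Z_len[OF L(1)] by simp
    have yij: "y ! i \<le> y ! j" using L ij j by (intro sorted_nth_mono) auto
    show "Z a b y ! i \<le> Z a b y ! j"
    proof (cases "j < a")
      case True thus ?thesis using ij j yij Z_nth[OF L(1)] by auto
    next
      case False
      have "y ! a \<le> y ! j" using L False j by (intro sorted_nth_mono) auto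
      moreover have "i < a \<Longrightarrow> y ! i \<le> y ! (a - 1)" using L by (intro sorted_nth_mono) auto
      ultimately show ?thesis using False ij j yij assms(4) Z_nth[OF L(1)] by auto
    qed
  qed
  hence "T a b y = Z a b y" by (simp add: T_Z sorted_sort_id)
  thus ?thesis using Z_nth[OF L(1)] assms by simp
qed

lemma notA_bound:
  assumes "y \<in> Lambda (a + b)" "a \<ge> 1" "b \<ge> 1" "y \<notin> A_set a b"
  shows "y ! (a + b - 1) - y ! a < real a * y ! (a - 1)"
proof -
  have L: "length y = a + b" "sorted y" using Lam[OF assms(1)] by auto
  have S: "sum_list y > real b * y ! (a + b - 1)" using assms by (auto simp: A_set_def)
  have "sum_list y = (\<Sum>i<a. y ! i) + (\<Sum>i\<in>{a..<a+b}. y ! i)"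
    using L by (simp add: sum_list_sum_nth atLeast0LessThan sum_split_tail)
  also have "(\<Sum>i\<in>{a..<a+b}. y ! i) = y ! a + (\<Sum>i\<in>{Suc a..<a+b}. y ! i)"
    using assms by (subst sum.atLeast_Suc_lessThan) auto
  finally have E: "sum_list y = (\<Sum>i<a. y ! i) + y ! a + (\<Sum>i\<in>{Suc a..<a+b}. y ! i)" by simp
  have h1: "\<And>i. i \<in> {..<a} \<Longrightarrow> y ! i \<le> y ! (a - 1)"
    using L assms by (intro sorted_nth_mono) auto
  have B1: "(\<Sum>i<a. y ! i) \<le> real a * y ! (a - 1)"
    using sum_bounded_above[of "{..<a}" "\<lambda>i. y ! i" "y ! (a - 1)"] h1 by simp
  have h2: "\<And>i. i \<in> {Suc a..<a+b} \<Longrightarrow> y ! i \<le> y ! (a + b - 1)"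
    using L assms by (intro sorted_nth_mono) auto
  have B2: "(\<Sum>i\<in>{Suc a..<a+b}. y ! i) \<le> real (b - 1) * y ! (a + b - 1)"
    using sum_bounded_above[of "{Suc a..<a+b}" "\<lambda>i. y ! i" "y ! (a + b - 1)"] h2 by simp
  have "real (b - 1) = real b - 1" using assms by simp
  thus ?thesis using S E B1 B2 by (simp add: algebra_simps)
qed

theorem proposition4p6:
  fixes a b :: nat and x :: "real list"
  assumes "a \<ge> 1" and "b \<ge> 2"
    and "x \<in> Lambda (a + b)"
    and "rat_lin_indep x"
    and "\<not> (\<forall>i < a + b. (\<lambda>k. ((T a b ^^ k) x) ! i) \<longlonglongrightarrow> 0)"
  shows "\<exists>k \<ge> 1. (T a b ^^ k) x \<in> A_set a b"
proof (rule ccontr)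
  assume nA: "\<not> (\<exists>k \<ge> 1. (T a b ^^ k) x \<in> A_set a b)"
  have b1: "b \<ge> 1" using assms(2) by simp
  define y where "y k = (T a b ^^ k) x" for k
  have yS: "y (Suc k) = T a b (y k)" for k by (simp add: y_def)
  have y0: "y 0 = x" by (simp add: y_def)
  have yL: "y k \<in> Lambda (a + b)" for k
    by (induct k) (simp_all add: yS y0 assms(3) T_Lambda[OF _ assms(1)])
  have ylen: "length (y k) = a + b" for k using Lam[OF yL[of k]] by simp
  have yI: "rat_lin_indep (y k)" for k
  proof (induct k)
    case 0 thus ?case using assms y0 by simp
  next
    case (Suc k)
    have "rat_lin_indep (Z a b (y k))"
      by (rule indep_shift[where n = "a + b" and a = a and y = "y k"])
         (use Suc assms(1) ylen[of k] Z_nth[OF ylen[of k]] Z_len[OF ylen[of k]] in simp_all)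
    thus ?case by (simp add: yS T_Z indep_perm)
  qed
  have nAk: "k \<ge> 1 \<Longrightarrow> y k \<notin> A_set a b" for k using nA unfolding y_def by blast
  define v where "v k = y k ! (a - 1)" for k
  define M where "M k = y k ! (a + b - 1)" for k
  define S where "S k = sum_list (y k)" for k
  have vpos: "v k > 0" for k
  proof -
    have "0 \<le> v k" using Lam[OF yL[of k]] assms(1) by (simp add: v_def)
    moreover have "v k \<noteq> 0" using indep_nonzero[OF yI[of k], of "a - 1"] ylen[of k] assms(1)
      by (simp add: v_def)
    ultimately show ?thesis by simp
  qed
  have Snn: "S k \<ge> 0" for k
    using Lam[OF yL[of k]] unfolding S_def sum_list_sum_nth atLeast0LessThan by (auto intro!: sum_nonneg)
  have SS: "S (Suc k) = S k - real b * v k" for k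
    by (simp add: S_def v_def yS T_sum[OF ylen])
  have tele: "(\<Sum>i<N. v i) = (S 0 - S N) / real b" for N
    using b1 by (induct N) (auto simp: SS field_simps)
  have "(\<Sum>i<N. v i) \<le> S 0 / real b" for N
    using tele[of N] Snn[of N] b1 by (simp add: divide_right_mono)
  hence "summable v" using vpos less_imp_le by (intro summableI_nonneg_bounded[where x = "S 0 / real b"]) blast+
  hence v0: "v \<longlonglongrightarrow> 0" by (rule summable_LIMSEQ_zero)
  have MS: "M (Suc k) \<le> M k" for k
    using T_max[OF yL[of k] assms(1) b1] by (simp add: M_def yS)
  have Mdec: "k \<le> k' \<Longrightarrow> M k' \<le> M k" for k k'
    using lift_Suc_antimono_le[of M, OF MS] by blast
  have Mnn: "M k \<ge> 0" for k using Lam[OF yL[of k]] assms(1) by (simp add: M_def)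
  have yleM: "i < a + b \<Longrightarrow> y k ! i \<le> M k" for i k
    using Lam[OF yL[of k]] by (auto simp: M_def intro: sorted_nth_mono)
  have yge0: "i < a + b \<Longrightarrow> 0 \<le> y k ! i" for i k
    using Lam[OF yL[of k]] by auto
  show False
  proof (cases "\<forall>e>0. \<exists>k. M k < e")
    case True
    have "M \<longlonglongrightarrow> 0"
    proof (rule LIMSEQ_I)
      fix r :: real assume "0 < r"
      then obtain k where "M k < r" using True by blast
      hence "\<forall>n\<ge>k. norm (M n - 0) < r" using Mdec Mnn by (auto intro: le_less_trans)
      thus "\<exists>no. \<forall>n\<ge>no. norm (M n - 0) < r" by blast
    qed
    have "\<forall>i < a + b. (\<lambda>k. y k ! i) \<longlonglongrightarrow> 0"
    proof (intro allI impI)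
      fix i assume i: "i < a + b"
      show "(\<lambda>k. y k ! i) \<longlonglongrightarrow> 0"
        by (rule tendsto_sandwich[of "\<lambda>_. 0" _ _ M])
           (use i yleM yge0 \<open>M \<longlonglongrightarrow> 0\<close> in simp_all)
    qed
    thus False using assms(5) by (simp add: y_def)
  next
    case False
    then obtain e where e: "e > 0" "\<And>k. e \<le> M k" by (auto simp: not_less)
    have "e / (a + 2) > 0" using e by simp
    from LIMSEQ_D[OF v0 this] obtain K where K: "\<And>k. k \<ge> K \<Longrightarrow> \<bar>v k\<bar> < e / (a + 2)"
      by auto
    have keep: "v (Suc k) = v k" if k: "k \<ge> Suc K" for k
    proof -
      have "M k - y k ! a < real a * v k"
        using notA_bound[OF yL[of k] assms(1) b1 nAk] k by (simp add: M_def v_def)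
      moreover have "v k < e / (a + 2)" using K[of k] k by simp
      hence "(a + 2) * v k < e" by (simp add: field_simps)
      ultimately have "2 * v k \<le> y k ! a" using e(2)[of k] by (simp add: M_def algebra_simps)
      thus ?thesis using T_keep[OF yL[of k] assms(1) b1] by (simp add: v_def yS)
    qed
    have const: "v (m + Suc K) = v (Suc K)" for m
      by (induct m) (auto simp: keep)
    have "(\<lambda>m. v (m + Suc K)) \<longlonglongrightarrow> 0" using LIMSEQ_ignore_initial_segment[OF v0] .
    hence "v (Suc K) = 0" using const by (simp add: LIMSEQ_const_iff)
    thus False using vpos[of "Suc K"] by simp
  qed
qed

end
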